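(* Define $$\Psi_e(t)=\begin{cases}\tfrac{e^2}{4}t^2,&0\leq t\leq2,\\ e^t,&t>2.\end{cases}$$ Then: (a) $\Psi_e$ is a Young's function, and there are constants $0<m<M<\infty$ with $m\Psi_e(t)\leq\cosh(t)-1\leq M\Psi_e(t)$ for all $t\geq0$. Hence $L^{\Psi_e}(0,\infty)=L^{\cosh-1}(0,\infty)$ with equivalent norms. (b) With the Luxemburg norm, the fundamental function of $L^{\Psi_e}(0,\infty)$ is $$\varphi_e(t)=\begin{cases}\tfrac{e}{2}t^{1/2},&t\geq e^{-2},\\ \dfrac{1}{-\log t},&0<t<e^{-2}.\end{cases}$$ (c) $M_{\Psi_e}(s)=\sup_{t>0}\varphi_e(st)/\varphi_e(t)$ equals $1$ for $0<s\leq1$ and $s^{1/2}$ for $s>1$. (d) Consequently the upper fundamental index of $L^{\Psi_e}(0,\infty)$, and hence of $L^{\cosh-1}(0,\infty)$, equals $\tfrac12$, and the lower fundamental index equals $0$.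
   Context: Young's function: a convex $\Psi:[0,\infty)\to[0,\infty]$ with $\Psi(0)=\lim_{u\to0+}\Psi(u)=0$, $\Psi(u)\to\infty$ as $u\to\infty$, and $\Psi$ non-constant on $(0,\infty)$. The Orlicz space $L^\Psi(0,\infty)$ consists of measurable $f$ with $\int_0^\infty\Psi(\lambda|f|)<\infty$ for some $\lambda>0$. The Luxemburg norm is $\|f\|=\inf\{k>0:\int\Psi(|f|/k)\leq1\}$. The fundamental function is $\varphi(t)=\|\chi_E\|$ for $E$ of Lebesgue measure $t$. With $M_\Psi(s)=\sup_{t>0}\varphi(st)/\varphi(t)$, the fundamental indices are $$\underline{\beta}=\sup_{0<s<1}\frac{\log M_\Psi(s)}{\log s},\qquad \overline{\beta}=\inf_{s>1}\frac{\log M_\Psi(s)}{\log s}.$$ *)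

theory Defs
  imports "HOL-Analysis.Analysis"
begin

definition young_function :: "(real \<Rightarrow> ereal) \<Rightarrow> bool" where
  "young_function \<Psi> \<longleftrightarrow>
     (\<forall>x\<ge>0. \<Psi> x \<ge> 0) \<and>
     (\<forall>x y u. 0 \<le> x \<longrightarrow> 0 \<le> y \<longrightarrow> 0 < u \<longrightarrow> u < 1 \<longrightarrow>
        \<Psi> (u * x + (1 - u) * y) \<le> ereal u * \<Psi> x + ereal (1 - u) * \<Psi> y) \<and>
     \<Psi> 0 = 0 \<and>
     (\<Psi> \<longlongrightarrow> 0) (at_right 0) \<and>
     (\<Psi> \<longlongrightarrow> \<infinity>) at_top \<and>
     (\<exists>x>0. \<exists>y>0. \<Psi> x \<noteq> \<Psi> y)"

definition orlicz_modular :: "(real \<Rightarrow> ereal) \<Rightarrow> (real \<Rightarrow> real) \<Rightarrow> ennreal" where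
  "orlicz_modular \<Psi> f = (\<integral>\<^sup>+ x. e2ennreal (\<Psi> \<bar>f x\<bar>) \<partial>(lebesgue_on {0<..}))"

definition orlicz_space :: "(real \<Rightarrow> ereal) \<Rightarrow> (real \<Rightarrow> real) set" where
  "orlicz_space \<Psi> = {f. f \<in> borel_measurable (lebesgue_on {0<..}) \<and>
      (\<exists>c>0. orlicz_modular \<Psi> (\<lambda>x. c * f x) < \<infinity>)}"

definition luxemburg_norm :: "(real \<Rightarrow> ereal) \<Rightarrow> (real \<Rightarrow> real) \<Rightarrow> real" where
  "luxemburg_norm \<Psi> f = Inf {k. 0 < k \<and> orlicz_modular \<Psi> (\<lambda>x. f x / k) \<le> 1}"

text \<open>Fundamental function, computed on the representative set (0,t].\<close>
definition fundamental_function :: "(real \<Rightarrow> ereal) \<Rightarrow> real \<Rightarrow> real" where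
  "fundamental_function \<Psi> t = luxemburg_norm \<Psi> (indicator {0<..t})"

definition M_fun :: "(real \<Rightarrow> ereal) \<Rightarrow> real \<Rightarrow> real" where
  "M_fun \<Psi> s = (SUP t\<in>{0<..}. fundamental_function \<Psi> (s * t) / fundamental_function \<Psi> t)"

definition lower_index :: "(real \<Rightarrow> ereal) \<Rightarrow> real" where
  "lower_index \<Psi> = (SUP s\<in>{0<..<1}. ln (M_fun \<Psi> s) / ln s)"

definition upper_index :: "(real \<Rightarrow> ereal) \<Rightarrow> real" where
  "upper_index \<Psi> = (INF s\<in>{1<..}. ln (M_fun \<Psi> s) / ln s)"

definition Psi_e :: "real \<Rightarrow> real" where
  "Psi_e t = (if t \<le> 2 then exp 1 ^ 2 / 4 * t ^ 2 else exp t)"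

definition phi_e :: "real \<Rightarrow> real" where
  "phi_e t = (if exp (-2) \<le> t then exp 1 / 2 * sqrt t else 1 / (- ln t))"

end

theory Submission
  imports Defs "HOL-Real_Asymp.Real_Asymp"
begin

lemma Psi_e_nonneg: "Psi_e t \<ge> 0"
  by (simp add: Psi_e_def)

lemma Psi_e_0 [simp]: "Psi_e 0 = 0"
  by (simp add: Psi_e_def)

definition Psi_d :: "real \<Rightarrow> real" where
  "Psi_d t = (if t \<le> 2 then exp 1 ^ 2 / 2 * t else exp t)"

lemma exp2: "exp (2::real) = exp 1 ^ 2"
  by (metis exp_of_nat_mult mult.right_neutral of_nat_numeral)

lemma Psi_e_deriv: "(Psi_e has_real_derivative Psi_d x) (at x)"
proof -
  have eq: "Psi_e = (\<lambda>t. if t \<in> {..2} then exp 1 ^ 2 / 4 * t ^ 2 else exp t)"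
    by (auto simp: Psi_e_def fun_eq_iff)
  have "((\<lambda>t. if t \<in> {..2} then exp 1 ^ 2 / 4 * t ^ 2 else exp t) has_derivative
      (if x \<in> {..2} then (*) (exp 1 ^ 2 / 2 * x) else (*) (exp x))) (at x within ({..2} \<union> {2<..}))"
  proof (rule has_derivative_If_within_closures)
    show "((\<lambda>t. exp 1 ^ 2 / 4 * t ^ 2) has_derivative (*) (exp 1 ^ 2 / 2 * x))
      (at x within {..2} \<union> (closure {..2} \<inter> closure {2<..}))"
      by (rule has_derivative_at_withinI, rule has_field_derivative_imp_has_derivative)
         (auto intro!: derivative_eq_intros)
    show "(exp has_derivative (*) (exp x))
      (at x within {2<..} \<union> (closure {..2} \<inter> closure {2<..}))"
      by (rule has_derivative_at_withinI, rule has_field_derivative_imp_has_derivative)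
         (auto intro!: derivative_eq_intros)
    show "x \<in> closure {..2} \<Longrightarrow> x \<in> closure {2<..} \<Longrightarrow> exp 1 ^ 2 / 4 * x\<^sup>2 = exp x"
      by (simp add: exp2)
    show "x \<in> closure {..2} \<Longrightarrow> x \<in> closure {2<..} \<Longrightarrow> (*) (exp 1 ^ 2 / 2 * x) = (*) (exp x)"
      by (simp add: exp2)
    show "x \<in> {..2} \<union> {2<..}" by auto
  qed
  moreover have "{..2} \<union> {2<..} = (UNIV::real set)" by auto
  ultimately show ?thesis
    unfolding eq Psi_d_def has_field_derivative_def
    by (cases "x \<le> 2") auto
qed

lemma Psi_e_convex: "convex_on UNIV Psi_e"
proof (rule convex_on_realI[where f'=Psi_d])
  show "connected (UNIV::real set)" by simp
  show "(Psi_e has_real_derivative Psi_d x) (at x)" for x by (rule Psi_e_deriv)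
  fix x y :: real assume "x \<le> y"
  then show "Psi_d x \<le> Psi_d y"
  proof (cases "y \<le> 2")
    case True then show ?thesis using \<open>x \<le> y\<close> by (simp add: Psi_d_def)
  next
    case False
    then have e: "exp 1 ^ 2 \<le> exp y" by (simp flip: exp2)
    show ?thesis
    proof (cases "x \<le> 2")
      case True
      then have "exp 1 ^ 2 * x \<le> exp 1 ^ 2 * 2" by (intro mult_left_mono) auto
      then have "exp 1 ^ 2 * x \<le> exp y * 2" using e by linarith
      then have "exp 1 ^ 2 / 2 * x \<le> exp y" by simp
      then show ?thesis using True False by (simp add: Psi_d_def)
    next
      case False2: False
      then show ?thesis using False \<open>x \<le> y\<close> by (simp add: Psi_d_def)
    qed
  qed
qed

lemma Psi_e_scale:
  assumes "0 \<le> l" "l \<le> 1"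
  shows "Psi_e (l * x) \<le> l * Psi_e x"
proof (cases "l = 1")
  case True then show ?thesis by simp
next
  case False
  have "Psi_e (l * x + (1 - l) * 0) \<le> l * Psi_e x + (1 - l) * Psi_e 0"
    using convex_onD[OF Psi_e_convex, of l 0 x] assms by auto
  then show ?thesis by simp
qed

lemma Psi_e_cont: "isCont Psi_e x"
  using Psi_e_deriv DERIV_isCont by blast

lemma Psi_e_strict_mono: "0 \<le> x \<Longrightarrow> x < y \<Longrightarrow> Psi_e x < Psi_e y"
proof -
  assume a: "0 \<le> x" "x < y"
  show ?thesis
  proof (cases "y \<le> 2")
    case True then show ?thesis using a by (simp add: Psi_e_def mult_strict_left_mono power_strict_mono)
  next
    case False
    have e: "exp 1 ^ 2 < exp y" using False by (simp flip: exp2)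
    show ?thesis
    proof (cases "x \<le> 2")
      case True
      then have "x ^ 2 \<le> 2 ^ 2" using a by (intro power_mono) auto
      then have "x ^ 2 \<le> 4" by simp
      then have "exp 1 ^ 2 * x ^ 2 \<le> exp 1 ^ 2 * 4" by (intro mult_left_mono) auto
      then have "exp 1 ^ 2 * x ^ 2 < exp y * 4" using e by linarith
      then have "exp 1 ^ 2 / 4 * x ^ 2 < exp y" by simp
      then show ?thesis using True False by (simp add: Psi_e_def)
    next
      case False2: False
      then show ?thesis using False a by (simp add: Psi_e_def)
    qed
  qed
qed

lemma sinh_nonneg: "0 \<le> x \<Longrightarrow> 0 \<le> sinh (x::real)"
  by simp

lemma p_nonneg: assumes "0 \<le> x" shows "sinh x \<le> x * cosh (x::real)"
proof -
  have "(\<lambda>x. x * cosh x - sinh x) 0 \<le> (\<lambda>x. x * cosh x - sinh x) x"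
    by (rule DERIV_nonneg_imp_nondecreasing[OF assms])
       (auto intro!: derivative_eq_intros exI)
  then show ?thesis by simp
qed

lemma r_nonneg: assumes "0 \<le> x" shows "2 * (cosh x - 1) \<le> x * sinh (x::real)"
proof -
  have "(\<lambda>x. x * sinh x - 2 * cosh x) 0 \<le> (\<lambda>x. x * sinh x - 2 * cosh x) x"
  proof (rule DERIV_nonneg_imp_nondecreasing[OF assms])
    fix y :: real assume y: "0 \<le> y" "y \<le> x"
    have "((\<lambda>x. x * sinh x - 2 * cosh x) has_real_derivative (1 * sinh y + y * cosh y - 2 * sinh y)) (at y)"
      by (rule derivative_eq_intros refl | simp)+
    moreover have "0 \<le> 1 * sinh y + y * cosh y - 2 * sinh y" using p_nonneg[OF y(1)] by simp
    ultimately show "\<exists>d. ((\<lambda>x. x * sinh x - 2 * cosh x) has_real_derivative d) (at y) \<and> 0 \<le> d" by blast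
  qed
  then show ?thesis by simp
qed
lemma q_mono:
  assumes "0 < v" "v \<le> w"
  shows "(cosh v - 1) / v^2 \<le> (cosh w - 1) / (w::real)^2"
proof (rule DERIV_nonneg_imp_nondecreasing[OF assms(2)])
  fix y :: real assume y: "v \<le> y" "y \<le> w"
  then have yp: "0 < y" using assms by simp
  have "((\<lambda>x. (cosh x - 1) / x^2) has_real_derivative
        (sinh y * (y * y) - (cosh y - 1) * (2 * y)) / ((y * y) * (y * y))) (at y)"
    using yp by (auto intro!: derivative_eq_intros simp: power2_eq_square)
  moreover have "0 \<le> (sinh y * (y * y) - (cosh y - 1) * (2 * y)) / ((y * y) * (y * y))"
  proof -
    have "2 * (cosh y - 1) * y \<le> y * sinh y * y"
      using r_nonneg[of y] yp by (intro mult_right_mono) auto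
    then have "0 \<le> sinh y * (y * y) - (cosh y - 1) * (2 * y)" by (simp add: algebra_simps)
    then show ?thesis by simp
  qed
  ultimately show "\<exists>d. ((\<lambda>x. (cosh x - 1) / x^2) has_real_derivative d) (at y) \<and> 0 \<le> d" by blast
qed

lemma q_lim: "((\<lambda>x::real. (cosh x - 1)/x^2) \<longlongrightarrow> 1/2) (at_right 0)"
  by real_asymp

lemma cosh_lower:
  assumes "0 \<le> v" shows "v^2/2 \<le> cosh v - (1::real)"
proof (cases "v = 0")
  case True then show ?thesis by simp
next
  case False
  then have vp: "0 < v" using assms by simp
  have "1/2 \<le> (cosh v - 1) / v^2"
  proof (rule tendsto_upperbound[OF q_lim])
    show "\<forall>\<^sub>F x in at_right 0. (cosh x - 1) / x^2 \<le> (cosh v - 1) / v^2"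
      unfolding eventually_at_right_field using vp
      by (intro exI[of _ v]) (auto intro!: q_mono)
  qed simp
  then show ?thesis using vp by (simp add: field_simps)
qed

lemma q_near:
  assumes "0 < e"
  shows "\<exists>d>0. \<forall>x::real. 0 < x \<and> x < d \<longrightarrow> cosh x - 1 \<le> (1/2 + e) * x^2"
proof -
  have "\<forall>\<^sub>F x in at_right 0. (cosh x - 1)/x^2 < 1/2 + e"
    using order_tendstoD(2)[OF q_lim, of "1/2 + e"] assms by simp
  then obtain d where d: "d > 0" "\<And>x. 0 < x \<Longrightarrow> x < d \<Longrightarrow> (cosh x - 1)/x^2 < 1/2 + e"
    unfolding eventually_at_right_field by auto
  show ?thesis
  proof (intro exI[of _ d] conjI allI impI)
    fix x :: real assume "0 < x \<and> x < d"
    then have "(cosh x - 1)/x^2 < 1/2 + e" "0 < x" using d by auto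
    then show "cosh x - 1 \<le> (1/2 + e) * x^2" by (simp add: field_simps)
  qed (use d in auto)
qed

lemma modular_indicator:
  fixes P :: "real \<Rightarrow> real"
  assumes P0: "P 0 = 0" and k: "0 < k" and E: "E \<in> sets lebesgue" "E \<subseteq> {0<..}"
  shows "orlicz_modular (\<lambda>t. ereal (P t)) (\<lambda>x. indicator E x / k) = ennreal (P (1/k)) * emeasure lebesgue E"
proof -
  have "(\<lambda>x. e2ennreal (ereal (P \<bar>indicator E x / k\<bar>))) = (\<lambda>x. ennreal (P (1/k)) * indicator E x)"
    using k P0 by (auto simp: fun_eq_iff indicator_def)
  moreover have "E \<in> sets (lebesgue_on {0<..})"
    using E by (simp add: sets_restrict_space_iff)
  moreover have "emeasure (lebesgue_on {0<..}) E = emeasure lebesgue E"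
    using E by (simp add: emeasure_restrict_space)
  ultimately show ?thesis
    unfolding orlicz_modular_def by (simp add: nn_integral_cmult_indicator)
qed

lemma lux_indicator:
  fixes P :: "real \<Rightarrow> real"
  assumes P0: "P 0 = 0" and Pmono: "\<And>x y. 0 \<le> x \<Longrightarrow> x < y \<Longrightarrow> P x < P y"
    and x0: "0 < x0" "P x0 * t = 1" and t: "0 < t"
    and E: "E \<in> sets lebesgue" "E \<subseteq> {0<..}" "emeasure lebesgue E = ennreal t"
  shows "luxemburg_norm (\<lambda>t. ereal (P t)) (indicator E) = 1 / x0"
proof -
  have Pnn: "0 \<le> x \<Longrightarrow> 0 \<le> P x" for x
    using Pmono[of 0 x] P0 by (cases "x = 0") auto
  have le_iff: "0 \<le> a \<Longrightarrow> 0 \<le> b \<Longrightarrow> P a \<le> P b \<longleftrightarrow> a \<le> b" for a b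
    using Pmono[of a b] Pmono[of b a] by (cases a b rule: linorder_cases) auto
  have "{k. 0 < k \<and> orlicz_modular (\<lambda>t. ereal (P t)) (\<lambda>x. indicator E x / k) \<le> 1} = {1/x0..}"
  proof (intro set_eqI iffI)
    fix k assume "k \<in> {k. 0 < k \<and> orlicz_modular (\<lambda>t. ereal (P t)) (\<lambda>x. indicator E x / k) \<le> 1}"
    then have k: "0 < k" and "ennreal (P (1/k)) * ennreal t \<le> 1"
      using modular_indicator[of P k E, OF P0 _ E(1,2)] E(3) by auto
    then have "P (1/k) * t \<le> 1" using t Pnn[of "1/k"] by (simp add: ennreal_mult''[symmetric])
    then have "P (1/k) * t \<le> P x0 * t" using x0 by simp
    then have "P (1/k) \<le> P x0" using t by simp
    then have "1/k \<le> x0" using le_iff[of "1/k" x0] k x0 by simp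
    then have "1 \<le> x0 * k" using k by (simp add: divide_le_eq mult.commute)
    then have "1/x0 \<le> k" using x0 by (simp add: divide_le_eq mult.commute)
    then show "k \<in> {1/x0..}" by simp
  next
    fix k assume "k \<in> {1/x0..}"
    then have k1: "1/x0 \<le> k" by simp
    have "0 < 1/x0" using x0 by simp
    then have kp: "0 < k" using k1 by linarith
    have "1 \<le> x0 * k" using k1 x0 by (simp add: divide_le_eq mult.commute)
    then have k2: "1/k \<le> x0" using kp by (simp add: divide_le_eq mult.commute)
    have "P (1/k) \<le> P x0" using le_iff[of "1/k" x0] x0 k2 kp by simp
    then have "P (1/k) * t \<le> P x0 * t" using t by (intro mult_right_mono) auto
    then have "P (1/k) * t \<le> 1" using x0 by simp
    then have "ennreal (P (1/k)) * ennreal t \<le> 1"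
      using t Pnn[of "1/k"] kp by (simp add: ennreal_mult''[symmetric])
    then show "k \<in> {k. 0 < k \<and> orlicz_modular (\<lambda>t. ereal (P t)) (\<lambda>x. indicator E x / k) \<le> 1}"
      using modular_indicator[of P k E, OF P0 kp E(1,2)] E(3) kp by simp
  qed
  then show ?thesis unfolding luxemburg_norm_def by simp
qed

lemma emeasure_Ioc0: "0 < t \<Longrightarrow> emeasure lebesgue {0<..t::real} = ennreal t"
  by (simp add: emeasure_completion)

lemma sqrt_exp_m2: "sqrt (exp (-2)) = exp (-1::real)"
proof -
  have "exp (-2::real) = (exp (-1))^2" by (simp add: power2_eq_square flip: exp_add)
  then show ?thesis by simp
qed

lemma phi_e_x0:
  assumes t: "0 < t"
  shows "0 < 1 / phi_e t" "Psi_e (1 / phi_e t) * t = 1"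
proof -
  show "Psi_e (1 / phi_e t) * t = 1"
  proof (cases "exp (-2) \<le> t")
    case True
    then have "sqrt (exp (-2)) \<le> sqrt t" by simp
    then have s1: "exp (-1) \<le> sqrt t" by (simp add: sqrt_exp_m2)
    have "exp 1 * exp (-1) \<le> exp 1 * sqrt t" using s1 by (intro mult_left_mono) auto
    then have "1 \<le> exp 1 * sqrt t" by (simp add: exp_minus)
    then have le2: "2 / (exp 1 * sqrt t) \<le> 2"
      by (simp add: divide_le_eq)
    have "1 / phi_e t = 2 / (exp 1 * sqrt t)" using True by (simp add: phi_e_def)
    moreover have "Psi_e (2 / (exp 1 * sqrt t)) = 1 / t"
      using le2 t by (simp add: Psi_e_def power_divide power_mult_distrib)
    ultimately show ?thesis using t by simp
  next
    case False
    then have "ln t < ln (exp (-2))" using t by (subst ln_less_cancel_iff) auto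
    then have lt: "- ln t > 2" by simp
    have "1 / phi_e t = - ln t" using False by (simp add: phi_e_def)
    moreover have "Psi_e (- ln t) = 1 / t"
      using lt t by (simp add: Psi_e_def exp_minus inverse_eq_divide)
    ultimately show ?thesis using t by simp
  qed
  show "0 < 1 / phi_e t"
  proof (cases "exp (-2) \<le> t")
    case True then show ?thesis using t by (simp add: phi_e_def)
  next
    case False
    then have "ln t < ln (exp (-2))" using t by (subst ln_less_cancel_iff) auto
    then show ?thesis using False by (simp add: phi_e_def)
  qed
qed

lemma phi_e_pos: "0 < t \<Longrightarrow> 0 < phi_e t"
  using phi_e_x0(1) by (simp add: zero_less_divide_iff)

lemma lux_e:
  assumes t: "0 < t" and E: "E \<in> sets lebesgue" "E \<subseteq> {0<..}" "emeasure lebesgue E = ennreal t"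
  shows "luxemburg_norm (\<lambda>t. ereal (Psi_e t)) (indicator E) = phi_e t"
  using lux_indicator[of Psi_e "1 / phi_e t" t E, OF Psi_e_0 Psi_e_strict_mono phi_e_x0[OF t] t E]
  by simp

lemma fund_e: "0 < t \<Longrightarrow> fundamental_function (\<lambda>t. ereal (Psi_e t)) t = phi_e t"
  unfolding fundamental_function_def
  by (rule lux_e) (auto simp: emeasure_Ioc0)

lemma g_mono:
  assumes "2 \<le> v" "v \<le> (u::real)"
  shows "u * exp (-u/2) \<le> v * exp (-v/2)"
proof -
  have "1 + (u-v)/2 \<le> exp ((u-v)/2)" by (rule exp_ge_add_one_self)
  then have "v * (1 + (u-v)/2) \<le> v * exp ((u-v)/2)" using assms by (intro mult_left_mono) auto
  moreover have "u \<le> v * (1 + (u-v)/2)"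
  proof -
    have "(u - v) * 2 \<le> (u - v) * v" using assms by (intro mult_left_mono) auto
    moreover have "v * (1 + (u-v)/2) = v + ((u - v) * v) / 2" by (simp add: algebra_simps)
    moreover have "u \<le> v + p/2" if "(u-v)*2 \<le> p" for p using that by (simp add: field_simps)
    ultimately show ?thesis by metis
  qed
  ultimately have "u \<le> v * exp ((u-v)/2)" by linarith
  then have "u * exp (-u/2) \<le> v * exp ((u-v)/2) * exp (-u/2)" by (intro mult_right_mono) auto
  also have "\<dots> = v * exp (-v/2)" by (simp add: mult.assoc flip: exp_add) (simp add: field_simps)
  finally show ?thesis .
qed

lemma sqrt_as_exp: "0 < x \<Longrightarrow> sqrt x = exp (- (- ln x) / 2)"
  by (simp add: exp_ln_iff ln_sqrt[symmetric])

lemma small_u: "0 < x \<Longrightarrow> x < exp (-2) \<Longrightarrow> 2 < - ln (x::real)"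
proof -
  assume "0 < x" "x < exp (-2)"
  then have "ln x < ln (exp (-2))" by (subst ln_less_cancel_iff) auto
  then show ?thesis by simp
qed

lemma phi_sqrt:
  assumes "0 < x" "x \<le> y"
  shows "phi_e y * sqrt x \<le> phi_e x * sqrt y"
proof (cases "exp (-2) \<le> x")
  case True
  then show ?thesis using assms by (simp add: phi_e_def)
next
  case F1: False
  have ux: "2 < - ln x" using small_u assms F1 by simp
  have y0: "0 < y" using assms by simp
  show ?thesis
  proof (cases "exp (-2) \<le> y")
    case True
    have "(- ln x) * exp (-(- ln x)/2) \<le> 2 * exp (-2/2)"
      using g_mono[of 2 "- ln x"] ux by simp
    then have "(- ln x) * sqrt x \<le> 2 * exp (-1)" using sqrt_as_exp[OF assms(1)] by simp
    then have "exp 1 * ((- ln x) * sqrt x) \<le> exp 1 * (2 * exp (-1))" by (intro mult_left_mono) auto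
    moreover have "exp 1 * (2 * exp (-1)) = (2::real)" by (simp add: exp_minus)
    ultimately have "exp 1 * ((- ln x) * sqrt x) \<le> 2" by linarith
    then have "exp 1 / 2 * sqrt x \<le> 1 / (- ln x)" using ux by (simp add: field_simps)
    then have "exp 1 / 2 * sqrt x * sqrt y \<le> 1 / (- ln x) * sqrt y" using y0 by (intro mult_right_mono) auto
    then show ?thesis using True F1 by (simp add: phi_e_def mult_ac)
  next
    case False
    have uy: "2 < - ln y" using small_u y0 False by simp
    have "- ln y \<le> - ln x" using assms by simp
    then have "(- ln x) * exp (-(- ln x)/2) \<le> (- ln y) * exp (-(- ln y)/2)"
      using g_mono[of "- ln y" "- ln x"] uy by simp
    then have "(- ln x) * sqrt x \<le> (- ln y) * sqrt y"
      using sqrt_as_exp[OF assms(1)] sqrt_as_exp[OF y0] by simp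
    then have "sqrt x / (- ln y) \<le> sqrt y / (- ln x)" using ux uy by (simp add: field_simps)
    then show ?thesis using False F1 by (simp add: phi_e_def)
  qed
qed

lemma phi_e_mono:
  assumes "0 < x" "x \<le> y"
  shows "phi_e x \<le> phi_e y"
proof (cases "exp (-2) \<le> x")
  case True
  then show ?thesis using assms by (simp add: phi_e_def)
next
  case F1: False
  have ux: "2 < - ln x" using small_u assms F1 by simp
  have y0: "0 < y" using assms by simp
  show ?thesis
  proof (cases "exp (-2) \<le> y")
    case True
    then have "sqrt (exp (-2)) \<le> sqrt y" by simp
    then have s1: "exp (-1) \<le> sqrt y" by (simp add: sqrt_exp_m2)
    have "exp 1 * exp (-1) \<le> exp 1 * sqrt y" using s1 by (intro mult_left_mono) auto
    then have "1 \<le> exp 1 * sqrt y" by (simp add: exp_minus)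
    moreover have "1 / (- ln x) \<le> 1/2" using ux by (auto simp: divide_simps)
    ultimately show ?thesis using True F1 by (simp add: phi_e_def)
  next
    case False
    have uy: "2 < - ln y" using small_u y0 False by simp
    have "- ln y \<le> - ln x" using assms by simp
    then have "1 / (- ln x) \<le> 1 / (- ln y)" using uy by (intro frac_le) auto
    then show ?thesis using False F1 by (simp add: phi_e_def)
  qed
qed

lemma sup_eq_approx:
  fixes f :: "real \<Rightarrow> real"
  assumes "A \<noteq> {}" "\<And>x. x \<in> A \<Longrightarrow> f x \<le> b" "\<And>e. 0 < e \<Longrightarrow> \<exists>x\<in>A. b - e < f x"
  shows "(SUP x\<in>A. f x) = b"
proof (rule antisym)
  show "(SUP x\<in>A. f x) \<le> b" using assms by (intro cSUP_least) auto
  have bdd: "bdd_above (f ` A)" using assms(2) by (rule bdd_aboveI2)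
  show "b \<le> (SUP x\<in>A. f x)"
  proof (rule field_le_epsilon)
    fix e :: real assume "0 < e"
    then obtain x where "x \<in> A" "b - e < f x" using assms(3) by blast
    moreover have "f x \<le> (SUP x\<in>A. f x)" using bdd \<open>x \<in> A\<close> by (rule cSUP_upper2) simp
    ultimately show "b \<le> (SUP x\<in>A. f x) + e" by linarith
  qed
qed

lemma exp_ge_e2: "exp (-2) \<le> (1::real)" by simp

lemma M_e:
  assumes s: "0 < s"
  shows "M_fun (\<lambda>t. ereal (Psi_e t)) s = (if s \<le> 1 then 1 else sqrt s)"
proof -
  have "M_fun (\<lambda>t. ereal (Psi_e t)) s = (SUP t\<in>{0<..}. phi_e (s * t) / phi_e t)"
    unfolding M_fun_def using s by (intro SUP_cong) (auto simp: fund_e)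
  also have "\<dots> = (if s \<le> 1 then 1 else sqrt s)"
  proof (cases "s \<le> 1")
    case True
    have "(SUP t\<in>{0<..}. phi_e (s * t) / phi_e t) = 1"
    proof (rule sup_eq_approx)
      show "{0<..} \<noteq> ({}::real set)" by auto
      fix t :: real assume "t \<in> {0<..}"
      then have t: "0 < t" by simp
      have "phi_e (s * t) \<le> phi_e t" using True s t by (intro phi_e_mono) (auto simp: mult_le_cancel_right1)
      then show "phi_e (s * t) / phi_e t \<le> 1" using phi_e_pos[OF t] by simp
    next
      fix e :: real assume e: "0 < e"
      define c where "c = - ln s"
      have c0: "0 \<le> c" using True s by (simp add: c_def)
      define N where "N = 3 + c / e"
      have "0 \<le> c / e" using c0 e by simp
      then have N: "2 < N" by (simp add: N_def)
      define t where "t = exp (- N)"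
      have t: "0 < t" by (simp add: t_def)
      have st: "s * t = exp (- (N + c))"
      proof -
        have "s * t = exp (ln s) * exp (-N)" using s by (simp add: t_def)
        also have "\<dots> = exp (- (N + c))" by (simp add: c_def flip: exp_add)
        finally show ?thesis .
      qed
      have "exp (- N) < exp (-2)" using N by simp
      then have pt: "phi_e t = 1 / N" using N by (simp add: phi_e_def t_def)
      have "exp (- (N + c)) < exp (-2)" using N c0 by simp
      then have pst: "phi_e (s * t) = 1 / (N + c)" using N c0 by (simp add: phi_e_def st)
      have "e * N = 3 * e + c" using e by (simp add: N_def field_simps)
      then have "(1 - e) * (N + c) < N" using e c0 N by (simp add: algebra_simps) (smt (verit) mult_nonneg_nonneg)
      then have "1 - e < N / (N + c)" using N c0 by (simp add: field_simps)
      moreover have "phi_e (s * t) / phi_e t = N / (N + c)" using pt pst N c0 by simp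
      ultimately have "1 - e < phi_e (s * t) / phi_e t" by simp
      then show "\<exists>t\<in>{0<..}. 1 - e < phi_e (s * t) / phi_e t" using t by (metis greaterThan_iff)
    qed
    then show ?thesis using True by simp
  next
    case False
    have "(SUP t\<in>{0<..}. phi_e (s * t) / phi_e t) = sqrt s"
    proof (rule sup_eq_approx)
      show "{0<..} \<noteq> ({}::real set)" by auto
      fix t :: real assume "t \<in> {0<..}"
      then have t: "0 < t" by simp
      have "phi_e (s * t) * sqrt t \<le> phi_e t * sqrt (s * t)"
        using False t by (intro phi_sqrt) auto
      then have "phi_e (s * t) * sqrt t \<le> (phi_e t * sqrt s) * sqrt t" by (simp add: real_sqrt_mult mult_ac)
      then have "phi_e (s * t) \<le> phi_e t * sqrt s" using t by simp
      then show "phi_e (s * t) / phi_e t \<le> sqrt s" using phi_e_pos[OF t] by (simp add: divide_le_eq mult.commute)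
    next
      fix e :: real assume e: "0 < e"
      have "exp (-2) \<le> s * 1" using False exp_ge_e2 by linarith
      then have "phi_e (s * 1) / phi_e 1 = sqrt s" by (simp add: phi_e_def)
      then show "\<exists>t\<in>{0<..}. sqrt s - e < phi_e (s * t) / phi_e t" using e
        by (intro bexI[of _ 1]) auto
    qed
    then show ?thesis using False by simp
  qed
  finally show ?thesis .
qed

lemma upper_from_M:
  assumes "\<And>s. 1 < s \<Longrightarrow> M_fun P s = sqrt s"
  shows "upper_index P = 1/2"
proof -
  have "(\<lambda>s. ln (M_fun P s) / ln s) ` {1<..} = (\<lambda>s::real. 1/2::real) ` {1<..}"
    by (rule image_cong) (auto simp: assms ln_sqrt)
  then have "upper_index P = Inf ((\<lambda>s::real. 1/2::real) ` {1<..})"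
    unfolding upper_index_def by (simp only:)
  also have "\<dots> = 1/2" by (rule cINF_const) simp
  finally show ?thesis .
qed

lemma lower_from_M:
  assumes "\<And>s. 0 < s \<Longrightarrow> s < 1 \<Longrightarrow> M_fun P s = 1"
  shows "lower_index P = 0"
proof -
  have "(\<lambda>s. ln (M_fun P s) / ln s) ` {0<..<1} = (\<lambda>s::real. 0::real) ` {0<..<1}"
    by (rule image_cong) (auto simp: assms)
  then have "lower_index P = Sup ((\<lambda>s::real. 0::real) ` {0<..<1})"
    unfolding lower_index_def by (simp only:)
  also have "\<dots> = 0" by (rule cSUP_const) simp
  finally show ?thesis .
qed

definition phi_c :: "real \<Rightarrow> real" where
  "phi_c t = 1 / arcosh (1 + 1 / t)"

lemma arcosh_pos: "0 < u \<Longrightarrow> 0 < arcosh (1 + u::real)"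
proof -
  assume u: "0 < u"
  have "0 \<le> arcosh (1 + u)" using u by simp
  moreover have "arcosh (1 + u) \<noteq> 0" using u by simp
  ultimately show ?thesis by simp
qed

lemma cosh_arcosh1: "0 \<le> u \<Longrightarrow> cosh (arcosh (1 + u)) - 1 = (u::real)"
  by simp

lemma arcosh_mono1: "0 \<le> u \<Longrightarrow> u \<le> u' \<Longrightarrow> arcosh (1 + u) \<le> arcosh (1 + u'::real)"
  using cosh_real_nonneg_le_iff[of "arcosh (1 + u)" "arcosh (1 + u')"] by simp

lemma lux_c:
  assumes t: "0 < t" and E: "E \<in> sets lebesgue" "E \<subseteq> {0<..}" "emeasure lebesgue E = ennreal t"
  shows "luxemburg_norm (\<lambda>t. ereal (cosh t - 1)) (indicator E) = phi_c t"
proof -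
  have "luxemburg_norm (\<lambda>t. ereal ((\<lambda>x. cosh x - 1) t)) (indicator E) = 1 / arcosh (1 + 1 / t)"
  proof (rule lux_indicator[OF _ _ _ _ t E])
    show "cosh 0 - 1 = (0::real)" by simp
    show "cosh x - 1 < cosh y - 1" if "0 \<le> x" "x < y" for x y :: real
      using that cosh_real_nonneg_less_iff[of x y] by simp
    show "0 < arcosh (1 + 1 / t)" using t by (intro arcosh_pos) simp
    show "(cosh (arcosh (1 + 1 / t)) - 1) * t = 1" using t by simp
  qed
  then show ?thesis by (simp add: phi_c_def)
qed

lemma fund_c: "0 < t \<Longrightarrow> fundamental_function (\<lambda>t. ereal (cosh t - 1)) t = phi_c t"
  unfolding fundamental_function_def
  by (rule lux_c) (auto simp: emeasure_Ioc0)

lemma cosh_le_exp: "0 \<le> x \<Longrightarrow> cosh x \<le> exp (x::real)"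
  by (simp add: cosh_def)

lemma cosh_ge_exp: "exp x / 2 \<le> cosh (x::real)"
  by (simp add: cosh_def)

lemma ratio_c:
  assumes "0 < s" "0 < t"
  shows "phi_c (s * t) / phi_c t = arcosh (1 + 1/t) / arcosh (1 + 1/(s*t))"
  by (simp add: phi_c_def)

lemma M_c:
  assumes s: "0 < s"
  shows "M_fun (\<lambda>t. ereal (cosh t - 1)) s = (if s \<le> 1 then 1 else sqrt s)"
proof -
  define A where "A u = arcosh (1 + u)" for u :: real
  have Apos: "0 < u \<Longrightarrow> 0 < A u" for u using arcosh_pos by (simp add: A_def)
  have Ac: "0 \<le> u \<Longrightarrow> cosh (A u) - 1 = u" for u by (simp add: A_def)
  have Amono: "0 \<le> u \<Longrightarrow> u \<le> u' \<Longrightarrow> A u \<le> A u'" for u u' by (simp add: A_def arcosh_mono1)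
  have Aw: "0 \<le> w \<Longrightarrow> A (cosh w - 1) = w" for w by (simp add: A_def arcosh_cosh_real)
  have cw: "0 < w \<Longrightarrow> 0 < cosh w - 1" for w :: real
    using cosh_real_nonneg_less_iff[of 0 w] by simp
  have "M_fun (\<lambda>t. ereal (cosh t - 1)) s = (SUP t\<in>{0<..}. A (1/t) / A (1/(s*t)))"
    unfolding M_fun_def using s by (intro SUP_cong) (auto simp: fund_c phi_c_def A_def)
  also have "\<dots> = (if s \<le> 1 then 1 else sqrt s)"
  proof (cases "s \<le> 1")
    case True
    have "(SUP t\<in>{0<..}. A (1/t) / A (1/(s*t))) = 1"
    proof (rule sup_eq_approx)
      show "{0<..} \<noteq> ({}::real set)" by auto
      fix t :: real assume "t \<in> {0<..}"
      then have t: "0 < t" by simp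
      have "1/t \<le> 1/(s*t)" using True s t by (intro divide_left_mono) (auto simp: mult_le_cancel_right1)
      then have "A (1/t) \<le> A (1/(s*t))" using t by (intro Amono) auto
      then show "A (1/t) / A (1/(s*t)) \<le> 1" using Apos[of "1/(s*t)"] s t by simp
    next
      fix e :: real assume e: "0 < e"
      define c where "c = ln (4 / s)"
      have c0: "0 < c" using True s by (simp add: c_def)
      define w where "w = c / e + 1"
      have w0: "0 < w" using c0 e by (simp add: w_def add_pos_pos)
      define t where "t = 1 / (cosh w - 1)"
      have t: "0 < t" using cw[OF w0] by (simp add: t_def)
      have At: "A (1/t) = w" using Aw w0 by (simp add: t_def)
      define v where "v = A (1/(s*t))"
      have v0: "0 < v" using s t Apos by (simp add: v_def)
      have cv: "cosh v - 1 = (cosh w - 1) / s" using s t Ac[of "1/(s*t)"] by (simp add: v_def t_def)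
      have "cosh v \<le> cosh (w + c)"
      proof -
        have "exp (w + c) / 2 = exp w * (4 / s) / 2" using s by (simp add: exp_add c_def)
        also have "\<dots> = 2 * exp w / s" by simp
        finally have e1: "2 * exp w / s \<le> cosh (w + c)" using cosh_ge_exp[of "w + c"] by simp
        have "cosh w \<le> exp w" using w0 by (intro cosh_le_exp) simp
        then have "s + cosh w - 1 \<le> 2 * exp w" using True exp_gt_zero[of w] by linarith
        then have "(s + cosh w - 1) / s \<le> 2 * exp w / s" using s by (intro divide_right_mono) auto
        moreover have "cosh v = (s + cosh w - 1) / s" using cv s by (simp add: field_simps)
        ultimately show ?thesis using e1 by linarith
      qed
      then have vle: "v \<le> w + c" using cosh_real_nonneg_le_iff[of v "w + c"] v0 w0 c0 by simp
      have "e * w = c + e" using e by (simp add: w_def field_simps)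
      then have "(1 - e) * (w + c) < w" using e c0 w0 by (simp add: algebra_simps) (smt (verit) mult_pos_pos)
      then have "1 - e < w / (w + c)" using w0 c0 by (simp add: field_simps)
      also have "\<dots> \<le> w / v" using vle v0 w0 by (intro divide_left_mono) auto
      finally have "1 - e < A (1/t) / A (1/(s*t))" using At by (simp add: v_def)
      then show "\<exists>t\<in>{0<..}. 1 - e < A (1/t) / A (1/(s*t))" using t by (metis greaterThan_iff)
    qed
    then show ?thesis using True by simp
  next
    case False
    have "(SUP t\<in>{0<..}. A (1/t) / A (1/(s*t))) = sqrt s"
    proof (rule sup_eq_approx)
      show "{0<..} \<noteq> ({}::real set)" by auto
      fix t :: real assume "t \<in> {0<..}"
      then have t: "0 < t" by simp
      define w where "w = A (1/t)"
      define v where "v = A (1/(s*t))"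
      have v0: "0 < v" using s t Apos by (simp add: v_def)
      have "1/(s*t) \<le> 1/t" using False s t by (intro divide_left_mono) auto
      then have vw: "v \<le> w" using s t by (simp add: v_def w_def Amono)
      have "(cosh v - 1) / v^2 \<le> (cosh w - 1) / w^2" using v0 vw by (rule q_mono)
      moreover have "cosh v - 1 = 1/(s*t)" "cosh w - 1 = 1/t" using s t Ac by (auto simp: v_def w_def)
      ultimately have "1/(s*t) / v^2 \<le> 1/t / w^2" by simp
      then have "w^2 \<le> s * v^2" using s t v0 vw by (simp add: field_simps)
      then have "sqrt (w^2) \<le> sqrt (s * v^2)" by (rule real_sqrt_le_mono)
      then have "w \<le> sqrt s * v" using v0 vw by (simp add: real_sqrt_mult)
      then show "A (1/t) / A (1/(s*t)) \<le> sqrt s" using v0 by (simp add: w_def v_def divide_le_eq)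
    next
      fix e :: real assume e: "0 < e"
      have sq: "0 < sqrt s" using s by simp
      define e' where "e' = min (1/4) (e / (4 * sqrt s))"
      have e'0: "0 < e'" using e sq by (simp add: e'_def)
      have e'1: "e' \<le> 1/4" by (simp add: e'_def)
      have e'2: "e' * (4 * sqrt s) \<le> e" using sq by (simp add: e'_def min_def field_simps)
      obtain d where d: "d > 0" "\<And>x. 0 < x \<and> x < d \<longrightarrow> cosh x - 1 \<le> (1/2 + e') * x^2"
        using q_near[OF e'0] by blast
      define w where "w = d / 2"
      have w0: "0 < w" "w < d" using d by (auto simp: w_def)
      define t where "t = 1 / (cosh w - 1)"
      have t: "0 < t" using cw[OF w0(1)] by (simp add: t_def)
      have At: "A (1/t) = w" using Aw w0 by (simp add: t_def)
      define v where "v = A (1/(s*t))"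
      have v0: "0 < v" using s t Apos by (simp add: v_def)
      have cv: "cosh v - 1 = (cosh w - 1) / s" using s t Ac[of "1/(s*t)"] by (simp add: v_def t_def)
      have "1/(s*t) \<le> 1/t" using False s t by (intro divide_left_mono) auto
      then have "v \<le> A (1/t)" using s t by (simp add: v_def Amono)
      then have vw: "v \<le> w" using At by simp
      have "v^2/2 \<le> (cosh w - 1) / s" using cosh_lower[of v] v0 cv by simp
      also have "\<dots> \<le> (1/2 + e') * w^2 / s" using d(2)[of w] w0 s by (intro divide_right_mono) auto
      finally have key: "s * v^2 \<le> (1 + 2 * e') * w^2" using s by (simp add: field_simps)
      define r where "r = 1 - 2 * e'"
      have r0: "0 \<le> r" "r \<le> 1" using e'0 e'1 by (auto simp: r_def)
      have "(sqrt s * v * r)^2 = (s * v^2) * r^2" using s by (simp add: power_mult_distrib)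
      also have "\<dots> \<le> ((1 + 2 * e') * w^2) * r^2" using key by (intro mult_right_mono) auto
      also have "\<dots> = w^2 * ((1 + 2*e') * r * r)" by (simp add: power2_eq_square mult_ac)
      also have "\<dots> \<le> w^2 * 1"
      proof (intro mult_left_mono)
        have "(1 + 2*e') * r = 1 - 4 * e'^2" by (simp add: r_def power2_eq_square algebra_simps)
        then have "(1 + 2*e') * r \<le> 1" by simp
        moreover have "0 \<le> (1 + 2*e') * r" using e'0 r0 by simp
        ultimately show "(1 + 2*e') * r * r \<le> 1" using r0 by (metis mult_le_one)
      qed simp
      finally have "(sqrt s * v * r)^2 \<le> w^2" by simp
      then have "sqrt s * v * r \<le> w" by (rule power2_le_imp_le) (use w0 in simp)
      then have "sqrt s * r * v \<le> w" by (simp only: mult.commute mult.left_commute mult.assoc)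
      then have "sqrt s * r \<le> w / v" using v0 by (simp add: le_divide_eq)
      moreover have "sqrt s - e < sqrt s * r"
      proof -
        have "sqrt s * r = sqrt s - 2 * e' * sqrt s" by (simp add: r_def algebra_simps)
        moreover have "2 * e' * sqrt s = e' * (4 * sqrt s) / 2" by simp
        ultimately show ?thesis using e'2 e by linarith
      qed
      ultimately have "sqrt s - e < A (1/t) / A (1/(s*t))" using At by (simp add: v_def)
      then show "\<exists>t\<in>{0<..}. sqrt s - e < A (1/t) / A (1/(s*t))" using t by (metis greaterThan_iff)
    qed
    then show ?thesis using False by simp
  qed
  finally show ?thesis .
qed

lemma young_e: "young_function (\<lambda>t. ereal (Psi_e t))"
  unfolding young_function_def
proof (intro conjI allI impI)
  show "0 \<le> ereal (Psi_e x)" for x using Psi_e_nonneg by simp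
  fix x y u :: real assume xy: "0 \<le> x" "0 \<le> y" "0 < u" "u < 1"
  have "Psi_e ((1 - (1 - u)) * x + (1 - u) * y) \<le> (1 - (1 - u)) * Psi_e x + (1 - u) * Psi_e y"
    using convex_onD[OF Psi_e_convex, of "1 - u" x y] xy by auto
  then show "ereal (Psi_e (u * x + (1 - u) * y)) \<le> ereal u * ereal (Psi_e x) + ereal (1 - u) * ereal (Psi_e y)"
    by simp
next
  show "ereal (Psi_e 0) = 0" by simp
next
  have "(Psi_e \<longlongrightarrow> Psi_e 0) (at 0)" using Psi_e_cont isCont_def by blast
  then have "(Psi_e \<longlongrightarrow> 0) (at_right 0)" by (simp add: filterlim_at_split)
  then show "((\<lambda>t. ereal (Psi_e t)) \<longlongrightarrow> 0) (at_right 0)"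
    using lim_ereal[of Psi_e 0 "at_right 0"] by (simp add: zero_ereal_def)
next
  have "\<forall>\<^sub>F t in at_top. exp t = Psi_e t"
    unfolding eventually_at_top_linorder by (intro exI[of _ 3]) (auto simp: Psi_e_def)
  then have "filterlim (exp::real\<Rightarrow>real) at_top at_top = filterlim Psi_e at_top at_top"
    by (rule filterlim_cong[OF refl refl])
  then have "filterlim Psi_e at_top at_top" using exp_at_top by simp
  then show "((\<lambda>t. ereal (Psi_e t)) \<longlongrightarrow> \<infinity>) at_top"
    by (simp add: tendsto_PInfty_eq_at_top)
next
  show "\<exists>x>0. \<exists>y>0. ereal (Psi_e x) \<noteq> ereal (Psi_e y)"
  proof -
    have "Psi_e 1 \<noteq> Psi_e 2" using Psi_e_strict_mono[of 1 2] by simp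
    then show ?thesis by (metis ereal.inject zero_less_one zero_less_numeral)
  qed
qed

lemma exp1_sq: "exp 1 ^ 2 \<le> (9::real)"
proof -
  have "exp (1::real) \<le> 3" using exp_le by simp
  then have "exp 1 ^ 2 \<le> (3::real) ^ 2" by (intro power_mono) auto
  then show ?thesis by simp
qed

lemma bounds_e:
  assumes t: "0 \<le> t"
  shows "1/8 * Psi_e t \<le> cosh t - 1" "cosh t - 1 \<le> 1 * Psi_e t"
proof -
  show "1/8 * Psi_e t \<le> cosh t - 1"
  proof (cases "t \<le> 2")
    case True
    have "exp 1 ^ 2 * t^2 \<le> 9 * t^2" using exp1_sq by (intro mult_right_mono) auto
    moreover have "t^2/2 \<le> cosh t - 1" using cosh_lower t by simp
    ultimately show ?thesis using True cosh_real_ge_1[of t] by (simp add: Psi_e_def; linarith)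
  next
    case False
    have "exp (2::real) \<le> exp t" using False by simp
    moreover have "1 + 2 \<le> exp (2::real)" using exp_ge_add_one_self[of 2] by simp
    ultimately have "3 \<le> exp t" by linarith
    moreover have "exp t / 2 \<le> cosh t" by (rule cosh_ge_exp)
    ultimately show ?thesis using False by (simp add: Psi_e_def)
  qed
  show "cosh t - 1 \<le> 1 * Psi_e t"
  proof (cases "t \<le> 2")
    case True
    show ?thesis
    proof (cases "t = 0")
      case True then show ?thesis by simp
    next
      case False
      then have t0: "0 < t" using t by simp
      have "(cosh t - 1) / t^2 \<le> (cosh 2 - 1) / 2^2" using t0 True by (intro q_mono) auto
      moreover have "cosh (2::real) \<le> exp 1 ^ 2" using cosh_le_exp[of 2] exp2 by simp
      ultimately have "(cosh t - 1) / t^2 \<le> exp 1 ^ 2 / 4" by simp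
      then show ?thesis using True t0 by (simp add: Psi_e_def field_simps)
    qed
  next
    case False
    then show ?thesis using cosh_le_exp[of t] by (simp add: Psi_e_def)
  qed
qed

lemma Psi_e_meas: "Psi_e \<in> borel_measurable borel"
  by (rule borel_measurable_continuous_onI) (simp add: Psi_e_cont continuous_at_imp_continuous_on)

lemma comp_meas:
  fixes Q g :: "real \<Rightarrow> real"
  assumes Q: "Q \<in> borel_measurable borel" and g: "g \<in> borel_measurable (lebesgue_on {0<..})"
  shows "(\<lambda>x. ennreal (Q \<bar>g x\<bar>)) \<in> borel_measurable (lebesgue_on {0<..})"
proof -
  have "(\<lambda>x. \<bar>g x\<bar>) \<in> borel_measurable (lebesgue_on {0<..})" using g by (rule borel_measurable_abs)
  then have "(\<lambda>x. Q \<bar>g x\<bar>) \<in> borel_measurable (lebesgue_on {0<..})"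
    using measurable_compose[OF _ Q] by blast
  then show ?thesis by measurable
qed

lemma modular_le:
  fixes P Q g :: "real \<Rightarrow> real"
  assumes PQ: "\<And>y. 0 \<le> y \<Longrightarrow> P y \<le> a * Q y" and Qnn: "\<And>y. 0 \<le> y \<Longrightarrow> 0 \<le> Q y"
    and Q: "Q \<in> borel_measurable borel" and g: "g \<in> borel_measurable (lebesgue_on {0<..})"
  shows "orlicz_modular (\<lambda>t. ereal (P t)) g \<le> ennreal a * orlicz_modular (\<lambda>t. ereal (Q t)) g"
proof -
  have "(\<integral>\<^sup>+ x. ennreal (P \<bar>g x\<bar>) \<partial>(lebesgue_on {0<..})) \<le>
        (\<integral>\<^sup>+ x. ennreal a * ennreal (Q \<bar>g x\<bar>) \<partial>(lebesgue_on {0<..}))"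
  proof (rule nn_integral_mono)
    fix x
    have "ennreal (P \<bar>g x\<bar>) \<le> ennreal (a * Q \<bar>g x\<bar>)" using PQ[of "\<bar>g x\<bar>"] by (intro ennreal_leI) simp
    also have "\<dots> = ennreal a * ennreal (Q \<bar>g x\<bar>)" using Qnn[of "\<bar>g x\<bar>"] by (simp add: ennreal_mult'')
    finally show "ennreal (P \<bar>g x\<bar>) \<le> ennreal a * ennreal (Q \<bar>g x\<bar>)" .
  qed
  also have "\<dots> = ennreal a * (\<integral>\<^sup>+ x. ennreal (Q \<bar>g x\<bar>) \<partial>(lebesgue_on {0<..}))"
    by (rule nn_integral_cmult[OF comp_meas[OF Q g]])
  finally show ?thesis unfolding orlicz_modular_def by simp
qed

lemma modular_mono:
  fixes P Q g h :: "real \<Rightarrow> real"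
  assumes PQ: "\<And>x. P \<bar>g x\<bar> \<le> Q \<bar>h x\<bar>"
  shows "orlicz_modular (\<lambda>t. ereal (P t)) g \<le> orlicz_modular (\<lambda>t. ereal (Q t)) h"
  unfolding orlicz_modular_def
  by (rule nn_integral_mono) (simp add: ennreal_leI PQ)

lemma Psi_e_le_cosh8: "0 \<le> y \<Longrightarrow> Psi_e (y / 8) \<le> cosh y - 1"
proof -
  assume y: "0 \<le> y"
  have "Psi_e ((1/8) * y) \<le> (1/8) * Psi_e y" by (rule Psi_e_scale) auto
  then show ?thesis using bounds_e(1)[OF y] by simp
qed

lemma space_eq: "orlicz_space (\<lambda>t. ereal (Psi_e t)) = orlicz_space (\<lambda>t. ereal (cosh t - 1))"
proof (intro set_eqI iffI)
  fix f assume "f \<in> orlicz_space (\<lambda>t. ereal (Psi_e t))"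
  then obtain c where f: "f \<in> borel_measurable (lebesgue_on {0<..})" "c > 0"
    "orlicz_modular (\<lambda>t. ereal (Psi_e t)) (\<lambda>x. c * f x) < \<infinity>"
    unfolding orlicz_space_def by auto
  have "orlicz_modular (\<lambda>t. ereal (cosh t - 1)) (\<lambda>x. c * f x) \<le> orlicz_modular (\<lambda>t. ereal (Psi_e t)) (\<lambda>x. c * f x)"
    by (rule modular_mono) (use bounds_e(2)[OF abs_ge_zero] in simp)
  then show "f \<in> orlicz_space (\<lambda>t. ereal (cosh t - 1))"
    using f unfolding orlicz_space_def by (auto intro!: exI[of _ c])
next
  fix f assume "f \<in> orlicz_space (\<lambda>t. ereal (cosh t - 1))"
  then obtain c where f: "f \<in> borel_measurable (lebesgue_on {0<..})" "c > 0"
    "orlicz_modular (\<lambda>t. ereal (cosh t - 1)) (\<lambda>x. c * f x) < \<infinity>"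
    unfolding orlicz_space_def by auto
  have "orlicz_modular (\<lambda>t. ereal (Psi_e t)) (\<lambda>x. c / 8 * f x) \<le> orlicz_modular (\<lambda>t. ereal (cosh t - 1)) (\<lambda>x. c * f x)"
  proof (rule modular_mono)
    fix x
    have "\<bar>c / 8 * f x\<bar> = \<bar>c * f x\<bar> / 8" by (simp add: abs_mult)
    then show "Psi_e \<bar>c / 8 * f x\<bar> \<le> cosh \<bar>c * f x\<bar> - 1" using Psi_e_le_cosh8[of "\<bar>c * f x\<bar>"] by simp
  qed
  then show "f \<in> orlicz_space (\<lambda>t. ereal (Psi_e t))"
    using f unfolding orlicz_space_def by (auto intro!: exI[of _ "c / 8"])
qed

lemma nonempty_e:
  assumes "f \<in> orlicz_space (\<lambda>t. ereal (Psi_e t))"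
  shows "\<exists>k>0. orlicz_modular (\<lambda>t. ereal (Psi_e t)) (\<lambda>x. f x / k) \<le> 1"
proof -
  obtain c where f: "f \<in> borel_measurable (lebesgue_on {0<..})" "c > 0"
    "orlicz_modular (\<lambda>t. ereal (Psi_e t)) (\<lambda>x. c * f x) < \<infinity>"
    using assms unfolding orlicz_space_def by auto
  define A where "A = orlicz_modular (\<lambda>t. ereal (Psi_e t)) (\<lambda>x. c * f x)"
  define a where "a = enn2real A"
  have Aa: "A = ennreal a" using f(3) by (simp add: a_def A_def)
  have a0: "0 \<le> a" by (simp add: a_def)
  define l where "l = 1 / (a + 1)"
  have l0: "0 < l" "l \<le> 1" using a0 by (auto simp: l_def)
  define k where "k = (a + 1) / c"
  have k0: "0 < k" using a0 f(2) by (simp add: k_def)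
  have gm: "(\<lambda>x. c * f x) \<in> borel_measurable (lebesgue_on {0<..})" using f(1) by measurable
  have "orlicz_modular (\<lambda>t. ereal (Psi_e t)) (\<lambda>x. f x / k) = orlicz_modular (\<lambda>t. ereal (Psi_e (l * t))) (\<lambda>x. c * f x)"
    unfolding orlicz_modular_def
  proof (rule nn_integral_cong)
    fix x
    have "\<bar>f x / k\<bar> = l * \<bar>c * f x\<bar>"
      using f(2) a0 by (simp add: k_def l_def abs_mult field_simps)
    then show "e2ennreal (ereal (Psi_e \<bar>f x / k\<bar>)) = e2ennreal (ereal (Psi_e (l * \<bar>c * f x\<bar>)))" by simp
  qed
  also have "\<dots> \<le> ennreal l * A" unfolding A_def
    by (rule modular_le[OF _ _ Psi_e_meas gm]) (use l0 Psi_e_scale Psi_e_nonneg in auto)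
  also have "\<dots> = ennreal (l * a)" using Aa l0 a0 by (simp add: ennreal_mult)
  also have "l * a \<le> 1" using a0 by (simp add: l_def)
  then have "ennreal (l * a) \<le> 1" by simp
  finally show ?thesis using k0 by blast
qed

lemma norm_equiv:
  assumes f: "f \<in> orlicz_space (\<lambda>t. ereal (Psi_e t))"
  shows "1/8 * luxemburg_norm (\<lambda>t. ereal (Psi_e t)) f \<le> luxemburg_norm (\<lambda>t. ereal (cosh t - 1)) f \<and>
         luxemburg_norm (\<lambda>t. ereal (cosh t - 1)) f \<le> 1 * luxemburg_norm (\<lambda>t. ereal (Psi_e t)) f"
proof -
  define Se where "Se = {k. 0 < k \<and> orlicz_modular (\<lambda>t. ereal (Psi_e t)) (\<lambda>x. f x / k) \<le> 1}"
  define Sc where "Sc = {k. 0 < k \<and> orlicz_modular (\<lambda>t. ereal (cosh t - 1)) (\<lambda>x. f x / k) \<le> 1}"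
  have Se_ne: "Se \<noteq> {}" using nonempty_e[OF f] by (auto simp: Se_def)
  have sub: "Se \<subseteq> Sc"
  proof
    fix k assume "k \<in> Se"
    then have k: "0 < k" "orlicz_modular (\<lambda>t. ereal (Psi_e t)) (\<lambda>x. f x / k) \<le> 1" by (auto simp: Se_def)
    have "orlicz_modular (\<lambda>t. ereal (cosh t - 1)) (\<lambda>x. f x / k) \<le> orlicz_modular (\<lambda>t. ereal (Psi_e t)) (\<lambda>x. f x / k)"
    proof (rule modular_mono)
      fix x
      show "cosh \<bar>f x / k\<bar> - 1 \<le> Psi_e \<bar>f x / k\<bar>"
        using bounds_e(2)[OF abs_ge_zero, of "f x / k"] by (simp only: mult_1)
    qed
    then show "k \<in> Sc" using k by (auto simp: Sc_def)
  qed
  have Sc_ne: "Sc \<noteq> {}" using Se_ne sub by auto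
  have bddSe: "bdd_below Se" by (rule bdd_belowI[of _ 0]) (auto simp: Se_def)
  have bddSc: "bdd_below Sc" by (rule bdd_belowI[of _ 0]) (auto simp: Sc_def)
  have scale: "8 * k \<in> Se" if "k \<in> Sc" for k
  proof -
    have k: "0 < k" "orlicz_modular (\<lambda>t. ereal (cosh t - 1)) (\<lambda>x. f x / k) \<le> 1" using that by (auto simp: Sc_def)
    have "orlicz_modular (\<lambda>t. ereal (Psi_e t)) (\<lambda>x. f x / (8 * k)) \<le> orlicz_modular (\<lambda>t. ereal (cosh t - 1)) (\<lambda>x. f x / k)"
    proof (rule modular_mono)
      fix x
      have eq: "\<bar>f x / (8 * k)\<bar> = \<bar>f x / k\<bar> / 8" by (simp add: abs_mult)
      show "Psi_e \<bar>f x / (8 * k)\<bar> \<le> cosh \<bar>f x / k\<bar> - 1" unfolding eq by (rule Psi_e_le_cosh8) simp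
    qed
    then show ?thesis using k by (auto simp: Se_def)
  qed
  have "Inf Sc \<le> Inf Se" by (rule cInf_superset_mono[OF Se_ne bddSc sub])
  moreover have "1/8 * Inf Se \<le> Inf Sc"
  proof (rule cInf_greatest[OF Sc_ne])
    fix k assume "k \<in> Sc"
    then have "Inf Se \<le> 8 * k" using cInf_lower[OF scale bddSe] by blast
    then show "1/8 * Inf Se \<le> k" by simp
  qed
  ultimately show ?thesis unfolding luxemburg_norm_def Se_def Sc_def by simp
qed

theorem mainTheorem9:
  shows
  \<comment> \<open>(a)\<close>
  "young_function (\<lambda>t. ereal (Psi_e t)) \<and>
   (\<exists>m M. 0 < m \<and> m < M \<and>
      (\<forall>t\<ge>0. m * Psi_e t \<le> cosh t - 1 \<and> cosh t - 1 \<le> M * Psi_e t)) \<and>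
   orlicz_space (\<lambda>t. ereal (Psi_e t)) = orlicz_space (\<lambda>t. ereal (cosh t - 1)) \<and>
   (\<exists>c C. 0 < c \<and> 0 < C \<and>
      (\<forall>f\<in>orlicz_space (\<lambda>t. ereal (Psi_e t)).
         c * luxemburg_norm (\<lambda>t. ereal (Psi_e t)) f \<le> luxemburg_norm (\<lambda>t. ereal (cosh t - 1)) f \<and>
         luxemburg_norm (\<lambda>t. ereal (cosh t - 1)) f \<le> C * luxemburg_norm (\<lambda>t. ereal (Psi_e t)) f)) \<and>
   \<comment> \<open>(b)\<close>
   (\<forall>t>0. \<forall>E. E \<in> sets lebesgue \<longrightarrow> E \<subseteq> {0<..} \<longrightarrow> emeasure lebesgue E = ennreal t \<longrightarrow>
      luxemburg_norm (\<lambda>t. ereal (Psi_e t)) (indicator E) = phi_e t) \<and>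
   (\<forall>t>0. fundamental_function (\<lambda>t. ereal (Psi_e t)) t = phi_e t) \<and>
   \<comment> \<open>(c)\<close>
   (\<forall>s>0. M_fun (\<lambda>t. ereal (Psi_e t)) s = (if s \<le> 1 then 1 else sqrt s)) \<and>
   \<comment> \<open>(d)\<close>
   upper_index (\<lambda>t. ereal (Psi_e t)) = 1/2 \<and>
   upper_index (\<lambda>t. ereal (cosh t - 1)) = 1/2 \<and>
   lower_index (\<lambda>t. ereal (Psi_e t)) = 0 \<and>
   lower_index (\<lambda>t. ereal (cosh t - 1)) = 0"
proof (intro conjI)
  show "young_function (\<lambda>t. ereal (Psi_e t))" by (rule young_e)
  show "\<exists>m M. 0 < m \<and> m < M \<and> (\<forall>t\<ge>0. m * Psi_e t \<le> cosh t - 1 \<and> cosh t - 1 \<le> M * Psi_e t)"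
    using bounds_e by (intro exI[of _ "1/8"] exI[of _ 1]) auto
  show "orlicz_space (\<lambda>t. ereal (Psi_e t)) = orlicz_space (\<lambda>t. ereal (cosh t - 1))" by (rule space_eq)
  show "\<exists>c C. 0 < c \<and> 0 < C \<and>
      (\<forall>f\<in>orlicz_space (\<lambda>t. ereal (Psi_e t)).
         c * luxemburg_norm (\<lambda>t. ereal (Psi_e t)) f \<le> luxemburg_norm (\<lambda>t. ereal (cosh t - 1)) f \<and>
         luxemburg_norm (\<lambda>t. ereal (cosh t - 1)) f \<le> C * luxemburg_norm (\<lambda>t. ereal (Psi_e t)) f)"
    using norm_equiv by (intro exI[of _ "1/8"] exI[of _ 1]) auto
  show "\<forall>t>0. \<forall>E. E \<in> sets lebesgue \<longrightarrow> E \<subseteq> {0<..} \<longrightarrow> emeasure lebesgue E = ennreal t \<longrightarrow>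
      luxemburg_norm (\<lambda>t. ereal (Psi_e t)) (indicator E) = phi_e t"
    using lux_e by blast
  show "\<forall>t>0. fundamental_function (\<lambda>t. ereal (Psi_e t)) t = phi_e t" using fund_e by blast
  show "\<forall>s>0. M_fun (\<lambda>t. ereal (Psi_e t)) s = (if s \<le> 1 then 1 else sqrt s)" using M_e by blast
  show "upper_index (\<lambda>t. ereal (Psi_e t)) = 1/2" by (rule upper_from_M) (simp add: M_e)
  show "upper_index (\<lambda>t. ereal (cosh t - 1)) = 1/2" by (rule upper_from_M) (simp add: M_c)
  show "lower_index (\<lambda>t. ereal (Psi_e t)) = 0" by (rule lower_from_M) (simp add: M_e)
  show "lower_index (\<lambda>t. ereal (cosh t - 1)) = 0" by (rule lower_from_M) (simp add: M_c)
qed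

end
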